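(* There is a positive existential formula $CO(x)$ in the language $\{0,1,+,\mid,R,T\}$ such that for every prime $p$ and every $n\in\mathbb{Z}$, $\mathfrak{D}_p\models CO(n)$ if and only if $p\nmid n$. That is, the collection of sets $CO_p=\{n\in\mathbb{Z}: p\nmid n\}$ is uniformly positive existentially definable in $\mathcal{D}=\{\mathfrak{D}_p: p \text{ prime}\}$.
   Context: For a prime $p$, $x\mid_p y$ means $y=\pm xp^s$ for some $s\in\mathbb{Z}$. $\mathfrak{D}_p=(\mathbb{Z};0,1,+,\mid,\mid_p,\mathbb{Z}\smallsetminus\{-1,0,1\})$, where $\mid$ is ordinary divisibility, $R$ is interpreted as $\mid_p$, and the unary predicate $T$ as the set $\mathbb{Z}\smallsetminus\{-1,0,1\}$. *)

theory Defs
  imports "HOL-Computational_Algebra.Primes"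
begin

datatype tm = Var nat | Zero | One | Plus tm tm

datatype pefm =
    Eq tm tm
  | Dvd tm tm
  | Rel tm tm
  | Tp tm
  | Conj pefm pefm
  | Disj pefm pefm
  | Ex nat pefm

fun tval :: "(nat \<Rightarrow> int) \<Rightarrow> tm \<Rightarrow> int" where
  "tval e (Var i) = e i"
| "tval e Zero = 0"
| "tval e One = 1"
| "tval e (Plus s t) = tval e s + tval e t"

fun tvars :: "tm \<Rightarrow> nat set" where
  "tvars (Var i) = {i}"
| "tvars Zero = {}"
| "tvars One = {}"
| "tvars (Plus s t) = tvars s \<union> tvars t"

fun fvars :: "pefm \<Rightarrow> nat set" where
  "fvars (Eq s t) = tvars s \<union> tvars t"
| "fvars (Dvd s t) = tvars s \<union> tvars t"
| "fvars (Rel s t) = tvars s \<union> tvars t"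
| "fvars (Tp t) = tvars t"
| "fvars (Conj f g) = fvars f \<union> fvars g"
| "fvars (Disj f g) = fvars f \<union> fvars g"
| "fvars (Ex i f) = fvars f - {i}"

text \<open>x |_p y iff y = \<plusminus> x p^s for some integer s.\<close>
definition pdiv :: "nat \<Rightarrow> int \<Rightarrow> int \<Rightarrow> bool" where
  "pdiv p x y \<longleftrightarrow> (\<exists>s::int. \<exists>\<epsilon>\<in>{1,-1::int}.
      (if s \<ge> 0 then y = \<epsilon> * x * int p ^ nat s else y * int p ^ nat (-s) = \<epsilon> * x))"

text \<open>Satisfaction in the structure D_p = (Z; 0,1,+,|,|_p, Z - {-1,0,1}).\<close>
fun sat :: "nat \<Rightarrow> (nat \<Rightarrow> int) \<Rightarrow> pefm \<Rightarrow> bool" where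
  "sat p e (Eq s t) = (tval e s = tval e t)"
| "sat p e (Dvd s t) = (tval e s dvd tval e t)"
| "sat p e (Rel s t) = pdiv p (tval e s) (tval e t)"
| "sat p e (Tp t) = (tval e t \<notin> {-1, 0, 1})"
| "sat p e (Conj f g) = (sat p e f \<and> sat p e g)"
| "sat p e (Disj f g) = (sat p e f \<or> sat p e g)"
| "sat p e (Ex i f) = (\<exists>a. sat p (e(i := a)) f)"

end

theory Submission
  imports Defs "HOL-Number_Theory.Number_Theory"
begin

lemma pdiv_pow: "pdiv p 1 (int p ^ k)"
  unfolding pdiv_def by (rule exI[of _ "int k"]) auto

lemma sound:
  assumes pr: "prime p" and pd: "pdiv p 1 x" and t: "x \<notin> {-1,0,1}"
    and xy: "y + 1 = x" and d: "n dvd y" and pn: "int p dvd n"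
  shows False
proof -
  have pi: "prime (int p)" using pr by simp
  have py: "int p dvd y" using pn d by (rule dvd_trans)
  obtain s and \<epsilon>::int where e: "\<epsilon> \<in> {1,-1}" and
    h: "if s \<ge> 0 then x = \<epsilon> * 1 * int p ^ nat s else x * int p ^ nat (-s) = \<epsilon> * 1"
    using pd unfolding pdiv_def by blast
  have pe: "\<not> int p dvd \<epsilon>" using e pi by (auto simp: prime_dvd_mult_iff)
  show False
  proof (cases "s \<ge> 0")
    case True
    then have hx: "x = \<epsilon> * int p ^ nat s" using h by simp
    show ?thesis
    proof (cases "nat s = 0")
      case True then show ?thesis using hx e t by auto
    next
      case False
      then have "int p dvd x" using hx by (simp add: dvd_power)
      then have "int p dvd 1" using py xy by (metis add_diff_cancel_left' dvd_diff)
      then show ?thesis using pi by (simp add: prime_dvd_mult_iff)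
    qed
  next
    case False
    then have hx: "x * int p ^ nat (-s) = \<epsilon>" using h by simp
    have "nat (-s) \<noteq> 0" using False by simp
    then have "int p dvd x * int p ^ nat (-s)" by (simp add: dvd_power)
    then show ?thesis using hx pe by simp
  qed
qed

lemma complete:
  assumes pr: "prime p" and pn: "\<not> int p dvd n"
  shows "\<exists>k>0. n dvd int p ^ k - 1"
proof -
  define m where "m = nat \<bar>n\<bar>"
  have n0: "n \<noteq> 0" using pn by auto
  have m0: "m > 0" using n0 m_def by simp
  have "coprime (int p) n" using pn pr by (simp add: prime_imp_coprime)
  then have cp: "coprime p m" unfolding m_def
    by (metis coprime_abs_right_iff coprime_int_iff int_nat_eq abs_ge_zero nat_int)
  have "[p ^ totient m = 1] (mod m)" using euler_theorem[OF cp] .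
  then have "[int p ^ totient m = 1] (mod int m)"
    by (metis cong_int_iff of_nat_1 of_nat_power)
  then have "int m dvd int p ^ totient m - 1"
    by (simp add: cong_iff_dvd_diff)
  then have "n dvd int p ^ totient m - 1" unfolding m_def using n0 by simp
  moreover have "totient m > 0" using m0 by simp
  ultimately show ?thesis by blast
qed

theorem lemma4p10:
  shows "\<exists>CO :: pefm. fvars CO \<subseteq> {0} \<and>
     (\<forall>p::nat. prime p \<longrightarrow> (\<forall>n::int. sat p (\<lambda>_. n) CO \<longleftrightarrow> \<not> int p dvd n))"
proof (intro exI conjI allI impI)
  let ?F = "Ex 1 (Ex 2 (Conj (Conj (Rel One (Var 1)) (Tp (Var 1)))
             (Conj (Eq (Plus (Var 2) One) (Var 1)) (Dvd (Var 0) (Var 2)))))"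
  show "fvars ?F \<subseteq> {0}" by auto
  fix p :: nat and n :: int assume pr: "prime p"
  show "sat p (\<lambda>_. n) ?F \<longleftrightarrow> \<not> int p dvd n"
  proof
    assume "sat p (\<lambda>_. n) ?F"
    then obtain x y where "pdiv p 1 x" "x \<notin> {-1,0,1}" "y + 1 = x" "n dvd y" by auto
    then show "\<not> int p dvd n" using sound[OF pr] by blast
  next
    assume "\<not> int p dvd n"
    then obtain k where k: "k > 0" "n dvd int p ^ k - 1" using complete[OF pr] by blast
    have p2: "int p \<ge> 2" using pr prime_ge_2_nat by fastforce
    have "int p ^ 1 \<le> int p ^ k" using k p2 by (intro power_increasing) auto
    then have "int p ^ k \<ge> 2" using p2 by (metis power_one_right order_trans)
    then have "int p ^ k \<notin> {-1,0,1}" using p2 by auto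
    then show "sat p (\<lambda>_. n) ?F" using pdiv_pow[of p k] k
    proof -
      assume a: "int p ^ k \<notin> {-1,0,1}" "pdiv p 1 (int p ^ k)" "n dvd int p ^ k - 1"
      have "sat p ((\<lambda>_. n)(1 := int p ^ k, 2 := int p ^ k - 1))
         (Conj (Conj (Rel One (Var 1)) (Tp (Var 1)))
             (Conj (Eq (Plus (Var 2) One) (Var 1)) (Dvd (Var 0) (Var 2))))"
        using a by simp
      then show ?thesis by (simp only: sat.simps) blast
    qed
  qed
qed

end
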